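(* Consider the bidding-club model described in the context, and fix a given bidding club of size $k\ge 2$. Compare two situations. - Situation (a): agents play the equilibrium in which all invited agents accept and truthfully report their valuations, and singletons bid $b^e(v,P^{n,1})$ after the announcement $n$. - Situation (b): the same $k$ agents instead participate directly in the main auction as singleton bidders, and all agents follow the same strategies. Then singleton bidders and members of other bidding clubs have higher expected utility in situation (a) than in situation (b).
   Context: A single indivisible good is sold by a first-price auction with participation revelation. The auction proceeds as follows: (i) agents register; (ii) the auctioneer announces the number $n$ of registered bidders; (iii) registered bidders submit sealed bids; (iv) the highest bidder wins and pays his bid, and all others pay $0$. There is no participation fee. Agents are risk-neutral with independent private valuations drawn i.i.d. from a continuous, atomless cumulative distribution function $F$ on the nonnegative reals. A winner with valuation $v$ paying $t$ gets utility $v-t$; a non-winner paying $t$ gets utility $-t$. For an integer $m\ge2$ define $b^e(v,m)=v-F(v)^{-(m-1)}\int_0^vF(u)^{m-1}du$. For a distribution $P=(p_j)$ on the number of agents define $b^e(v,P)=\sum_{j\ge2}p_jb^e(v,j)$. Write $P_{x\ge i}=\sum_{x\ge i}p_x$. Write $P<P'$ iff there is $l$ with $P_{x\ge i}=P'_{x\ge i}$ for all $i<l$ and $P_{x\ge i}<P'_{x\ge i}$ for all $i\ge l$. Standing assumption: $P<P'$ implies $b^e(v,P)<b^e(v,P')$ for all $v$. Environment. The number $n_c$ of potential coordinators has distribution $\gamma_C$ with $\gamma_C(0)=\gamma_C(1)=0$. Independently, each potential coordinator is associated with a random number of agents with common distribution $\gamma_A$ on $\{1,\dots,\kappa\}$,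 where $\kappa\ge2$, $\gamma_A(0)=0$ and $\gamma_A(1)<1$. - A potential coordinator with one agent yields a singleton bidder. - A potential coordinator with at least two agents is a bidding club whose agents are all invited. Each agent privately knows his valuation and his club size ($1$ for singletons). All of this is common knowledge. $P^{n,k}$ denotes the distribution of $k+X_1+\dots+X_{n-1}$, where the $X_j$ are i.i.d. with distribution $\gamma_A$. Coordinator protocol for a club of $k$ invited agents: - Each agent declines (and bids independently) or accepts and reports a binding valuation $\mu_i$. - If some agent declines, every accepting agent is registered, with bid $b^e(\mu_i,P^{n,k})$ after the announcement $n$. - If all accept, only the highest reporter $h$ is registered, with bid $b^e(\mu_h,P^{n,1})$. If $h$ wins, he pays that bid to the auctioneer plus $b^e(\mu_h,P^{n,k})-b^e(\mu_h,P^{n,1})$ to the coordinator. *)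

theory Defs
  imports "HOL-Probability.Probability"
begin

definition be :: "(real \<Rightarrow> real) \<Rightarrow> real \<Rightarrow> nat \<Rightarrow> real" where
  "be F v m = v - inverse (F v ^ (m - 1)) * integral {0..v} (\<lambda>u. F u ^ (m - 1))"

definition beP :: "(real \<Rightarrow> real) \<Rightarrow> real \<Rightarrow> nat pmf \<Rightarrow> real" where
  "beP F v P = (\<Sum>\<^sub>\<infinity> j \<in> {2..}. pmf P j * be F v j)"

fun sum_iid :: "nat pmf \<Rightarrow> nat \<Rightarrow> nat pmf" where
  "sum_iid g 0 = return_pmf 0"
| "sum_iid g (Suc m) = bind_pmf g (\<lambda>x. map_pmf (\<lambda>s. x + s) (sum_iid g m))"

definition Pnk :: "nat pmf \<Rightarrow> nat \<Rightarrow> nat \<Rightarrow> nat pmf" where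
  "Pnk g n k = map_pmf (\<lambda>s. k + s) (sum_iid g (n - 1))"

text \<open>Probability, given n coordinators, that an agent with valuation v whose own club
  has size j (j = 1: singleton) has the highest valuation among all agents, when one of
  the other n-1 coordinators is the fixed club of size k and the remaining n-2 have
  i.i.d. sizes distributed by gA.  The total number of other agents is distributed as
  P^{n-1, (j-1)+k}; each of them has valuation below v with probability F v.\<close>
definition win_prob :: "(real \<Rightarrow> real) \<Rightarrow> nat pmf \<Rightarrow> nat \<Rightarrow> nat \<Rightarrow> nat \<Rightarrow> real \<Rightarrow> real" where
  "win_prob F gA n k j v = measure_pmf.expectation (Pnk gA (n - 1) ((j - 1) + k)) (\<lambda>t. F v ^ t)"

text \<open>Situation (a): the fixed club of size k coordinates; the number of registered bidders
  announced is n (= number of coordinators).  An agent with valuation v and club size j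
  wins iff he has the highest valuation and then pays (in total) b^e(v, P^{n,j}).\<close>
definition EU_a :: "(real \<Rightarrow> real) \<Rightarrow> nat pmf \<Rightarrow> nat pmf \<Rightarrow> nat \<Rightarrow> nat \<Rightarrow> real \<Rightarrow> real" where
  "EU_a F gC gA k j v = measure_pmf.expectation gC
     (\<lambda>n. win_prob F gA n k j v * (v - beP F v (Pnk gA n j)))"

text \<open>Situation (b): the k agents of the fixed club bid as singletons, so the announced
  number of registered bidders is n + k - 1, and everybody uses the same strategies
  (now evaluated at the announcement n + k - 1).\<close>
definition EU_b :: "(real \<Rightarrow> real) \<Rightarrow> nat pmf \<Rightarrow> nat pmf \<Rightarrow> nat \<Rightarrow> nat \<Rightarrow> real \<Rightarrow> real" where
  "EU_b F gC gA k j v = measure_pmf.expectation gC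
     (\<lambda>n. win_prob F gA n k j v * (v - beP F v (Pnk gA (n + k - 1) j)))"

end

theory Submission
  imports Defs
begin
lemma exp_less:
  fixes f g :: "'a \<Rightarrow> real"
  assumes "finite (set_pmf p)" "\<And>x. x \<in> set_pmf p \<Longrightarrow> f x < g x"
  shows "measure_pmf.expectation p f < measure_pmf.expectation p g"
proof -
  have i: "integrable p f" "integrable p g" using assms(1) by (auto intro: integrable_measure_pmf_finite)
  have "measure_pmf.expectation p (\<lambda>x. g x - f x) = (\<Sum>a\<in>set_pmf p. (g a - f a) * pmf p a)"
    by (rule integral_measure_pmf_real) (use assms in auto)
  also have "\<dots> > 0"
  proof (rule sum_pos)
    show "set_pmf p \<noteq> {}" by (simp add: set_pmf_not_empty)
  qed (use assms in \<open>auto simp: pmf_positive\<close>)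
  finally show ?thesis using i by simp
qed

lemma exp_le:
  fixes f g :: "'a \<Rightarrow> real"
  assumes "finite (set_pmf p)" "\<And>x. x \<in> set_pmf p \<Longrightarrow> f x \<le> g x"
  shows "measure_pmf.expectation p f \<le> measure_pmf.expectation p g"
proof -
  have i: "integrable p f" "integrable p g" using assms(1) by (auto intro: integrable_measure_pmf_finite)
  show ?thesis by (rule integral_mono_AE[OF i]) (use assms in \<open>auto simp: AE_measure_pmf_iff\<close>)
qed

lemma finite_sum_iid: "finite (set_pmf g) \<Longrightarrow> finite (set_pmf (sum_iid g m))"
  by (induction m) auto

lemma exp_bind_map:
  fixes h :: "nat \<Rightarrow> real"
  assumes "finite (set_pmf g)"
  shows "measure_pmf.expectation (sum_iid g (Suc m)) (\<lambda>s. h (c + s)) =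
     measure_pmf.expectation g (\<lambda>a. measure_pmf.expectation (sum_iid g m) (\<lambda>s. h (c + a + s)))"
proof -
  have "measure_pmf.expectation (sum_iid g (Suc m)) (\<lambda>s. h (c + s)) =
    (\<Sum>a\<in>set_pmf g. pmf g a *\<^sub>R measure_pmf.expectation (map_pmf (\<lambda>s. a + s) (sum_iid g m)) (\<lambda>s. h (c + s)))"
    unfolding sum_iid.simps
    by (rule pmf_expectation_bind) (use assms finite_sum_iid in auto)
  also have "\<dots> = measure_pmf.expectation g (\<lambda>a. measure_pmf.expectation (sum_iid g m) (\<lambda>s. h (c + a + s)))"
    by (subst integral_measure_pmf[OF assms]) (auto simp: add.assoc)
  finally show ?thesis .
qed

definition Phi :: "nat pmf \<Rightarrow> (nat \<Rightarrow> real) \<Rightarrow> nat \<Rightarrow> nat \<Rightarrow> real" where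
  "Phi g h m c = measure_pmf.expectation (sum_iid g m) (\<lambda>s. h (c + s))"

lemma Phi_mono_c:
  assumes g: "finite (set_pmf g)" "set_pmf g \<subseteq> {1..}"
    and h: "\<And>a b. 1 \<le> a \<Longrightarrow> a < b \<Longrightarrow> h a < h b"
  shows "1 \<le> c \<Longrightarrow> c < c' \<Longrightarrow> Phi g h m c < Phi g h m c'"
proof (induction m arbitrary: c c')
  case 0 then show ?case by (simp add: Phi_def h)
next
  case (Suc m)
  show ?case unfolding Phi_def exp_bind_map[OF g(1)]
    by (rule exp_less[OF g(1)]) (use Suc in \<open>auto simp: Phi_def\<close>)
qed

lemma Phi_mono_m_Suc:
  assumes g: "finite (set_pmf g)" "set_pmf g \<subseteq> {1..}"
    and h: "\<And>a b. 1 \<le> a \<Longrightarrow> a < b \<Longrightarrow> h a < h b"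
    and c: "1 \<le> c"
  shows "Phi g h m c < Phi g h (Suc m) c"
proof -
  have "Phi g h m c = measure_pmf.expectation g (\<lambda>a. Phi g h m c)" by simp
  also have "\<dots> < measure_pmf.expectation g (\<lambda>a. Phi g h m (c + a))"
    by (rule exp_less[OF g(1)]) (use g c in \<open>auto intro!: Phi_mono_c[OF g h]\<close>)
  also have "\<dots> = Phi g h (Suc m) c" unfolding Phi_def exp_bind_map[OF g(1)] by simp
  finally show ?thesis .
qed

lemma Phi_mono_m:
  assumes g: "finite (set_pmf g)" "set_pmf g \<subseteq> {1..}"
    and h: "\<And>a b. 1 \<le> a \<Longrightarrow> a < b \<Longrightarrow> h a < h b"
    and c: "1 \<le> c" and "m < m'"
  shows "Phi g h m c < Phi g h m' c"
  using lift_Suc_mono_less[of "\<lambda>m. Phi g h m c", OF Phi_mono_m_Suc[OF g h c] \<open>m < m'\<close>] .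

locale Fa =
  fixes F :: "real \<Rightarrow> real" and v :: real
  assumes F_mono: "mono F"
    and F_cont: "continuous_on UNIV F"
    and F0: "\<forall>x\<le>0. F x = 0"
    and v: "0 < F v"
begin

lemma v_pos: "0 < v"
  using F0 v by (metis linorder_not_le order_less_irrefl)

lemma be01: "be F v 0 = 0" "be F v 1 = 0"
  using v_pos by (simp_all add: be_def)

lemma r_bounds: "u \<in> {0..v} \<Longrightarrow> 0 \<le> F u / F v \<and> F u / F v \<le> 1"
proof -
  assume u: "u \<in> {0..v}"
  have "F 0 \<le> F u" "F u \<le> F v" using u F_mono by (auto simp: mono_def)
  then show ?thesis using F0 v by auto
qed

lemma be_alt: "be F v (Suc p) = v - integral {0..v} (\<lambda>u. (F u / F v) ^ p)"
proof -
  have "(\<lambda>u. (F u / F v) ^ p) = (\<lambda>u. inverse (F v ^ p) * F u ^ p)"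
    by (simp add: divide_inverse_commute power_mult_distrib power_inverse)
  then show ?thesis by (simp add: be_def integral_mult_right)
qed

lemma contr: "continuous_on {0..v} (\<lambda>u. (F u / F v) ^ p)"
  by (intro continuous_intros continuous_on_subset[OF F_cont]) (use v in auto)

lemma be_step: "be F v (Suc p) < be F v (Suc (Suc p))"
proof -
  let ?g = "\<lambda>u. (F u / F v) ^ p - (F u / F v) ^ Suc p"
  have cg: "continuous_on {0..v} ?g" by (intro continuous_on_diff contr)
  have nn: "\<And>u. u \<in> {0..v} \<Longrightarrow> ?g u \<ge> 0"
  proof -
    fix u assume "u \<in> {0..v}"
    from r_bounds[OF this] have "0 \<le> F u / F v" "F u / F v \<le> 1" by auto
    then have "(F u / F v) ^ Suc p \<le> (F u / F v) ^ p" by (intro power_decreasing) auto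
    then show "?g u \<ge> 0" by linarith
  qed
  have "\<exists>x. 0 \<le> x \<and> x \<le> v \<and> F x = F v / 2"
    by (rule IVT') (use F0 v v_pos continuous_on_subset[OF F_cont] in auto)
  then obtain u0 where u0: "0 \<le> u0" "u0 \<le> v" "F u0 = F v / 2" by blast
  have r0: "F u0 / F v = 1/2" using u0 v by simp
  have "?g u0 > 0" unfolding r0 by simp
  hence "integral {0..v} ?g \<noteq> 0"
  proof -
    have "integral {0..v} ?g = 0 \<longleftrightarrow> (\<forall>x\<in>{0..v}. ?g x = 0)"
      by (rule integral_eq_0_iff[OF cg v_pos]) (rule nn)
    moreover have "u0 \<in> {0..v}" using u0 by simp
    ultimately show ?thesis using \<open>?g u0 > 0\<close> by (metis less_irrefl)
  qed
  moreover have "integral {0..v} ?g \<ge> 0"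
    by (rule integral_nonneg) (use cg integrable_continuous_interval nn in auto)
  ultimately have "integral {0..v} ?g > 0" by linarith
  moreover have "integral {0..v} ?g = integral {0..v} (\<lambda>u. (F u / F v) ^ p) - integral {0..v} (\<lambda>u. (F u / F v) ^ Suc p)"
    by (rule integral_diff; rule integrable_continuous_interval; rule contr)
  ultimately show ?thesis unfolding be_alt by linarith
qed

lemma be_strict: "1 \<le> a \<Longrightarrow> a < b \<Longrightarrow> be F v a < be F v b"
proof -
  assume a: "1 \<le> a" "a < b"
  define a' b' where "a' = a - 1" "b' = b - 1"
  then have ab: "a = Suc a'" "b = Suc b'" using a by auto
  have "be F v (Suc a') < be F v (Suc b')"
    using lift_Suc_mono_less[of "\<lambda>p. be F v (Suc p)", OF be_step] a ab by simp
  with ab show ?thesis by simp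
qed

lemma be_nonneg: "0 \<le> be F v m"
proof (cases "m \<le> 1")
  case True then show ?thesis using be01 by (cases m) auto
next
  case False then show ?thesis using be_strict[of 1 m] be01 by simp
qed

lemma be_le: "be F v m \<le> v"
proof (cases m)
  case 0 then show ?thesis using be01 v_pos by simp
next
  case (Suc p)
  have "integral {0..v} (\<lambda>u. (F u / F v) ^ p) \<ge> 0"
    by (rule integral_nonneg) (use contr integrable_continuous_interval r_bounds in auto)
  then show ?thesis unfolding Suc be_alt by simp
qed

end
lemma beP_eq:
  assumes fin: "finite (set_pmf P)" and h01: "be F v 0 = 0" "be F v 1 = 0"
  shows "beP F v P = measure_pmf.expectation P (be F v)"
proof -
  have "beP F v P = infsum (\<lambda>i. pmf P i * be F v i) (set_pmf P \<inter> {2..})"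
    unfolding beP_def by (rule infsum_cong_neutral) (auto simp: set_pmf_eq)
  also have "\<dots> = (\<Sum>i\<in>set_pmf P \<inter> {2..}. pmf P i * be F v i)"
    using fin by simp
  also have "\<dots> = measure_pmf.expectation P (be F v)"
  proof (subst integral_measure_pmf_real[where A="set_pmf P \<inter> {2..}"])
    show "finite (set_pmf P \<inter> {2..})" using fin by simp
    show "\<And>a. a \<in> set_pmf P \<Longrightarrow> be F v a \<noteq> 0 \<Longrightarrow> a \<in> set_pmf P \<inter> {2..}"
    proof -
      fix a assume "a \<in> set_pmf P" "be F v a \<noteq> 0"
      moreover have "a \<noteq> 0" by (rule notI) (use h01(1) \<open>be F v a \<noteq> 0\<close> in simp)
      moreover have "a \<noteq> 1" by (rule notI) (use h01(2) \<open>be F v a \<noteq> 0\<close> in simp)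
      ultimately show "a \<in> set_pmf P \<inter> {2..}" by auto
    qed
  qed (simp add: mult.commute)
  finally show ?thesis .
qed

lemma finite_Pnk: "finite (set_pmf g) \<Longrightarrow> finite (set_pmf (Pnk g n k))"
  unfolding Pnk_def using finite_sum_iid by auto

lemma exp_Pnk: "measure_pmf.expectation (Pnk g n j) h = Phi g h (n - 1) j"
  unfolding Pnk_def Phi_def by simp

lemma F_le1:
  fixes F :: "real \<Rightarrow> real"
  assumes "mono F" "(F \<longlongrightarrow> 1) at_top"
  shows "F v \<le> (1::real)"
proof (rule tendsto_lowerbound[OF assms(2)])
  show "\<forall>\<^sub>F x in at_top. F v \<le> F x"
    using eventually_ge_at_top[of v] by eventually_elim (use assms(1) in \<open>auto simp: mono_def\<close>)
qed simp

theorem corollary2: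
  fixes F :: "real \<Rightarrow> real" and gC gA :: "nat pmf" and \<kappa> k j :: nat and v :: real
  assumes F_mono: "mono F"
    and F_cont: "continuous_on UNIV F"
    and F_nonneg_support: "\<forall>x\<le>0. F x = 0"
    and F_lim: "(F \<longlongrightarrow> 1) at_top"
    and gC0: "pmf gC 0 = 0" and gC1: "pmf gC 1 = 0"
    and kappa: "2 \<le> \<kappa>"
    and gA_supp: "set_pmf gA \<subseteq> {1..\<kappa>}"
    and gA1: "pmf gA 1 < 1"
    and k: "2 \<le> k" "k \<le> \<kappa>"
    and j: "1 \<le> j" "j \<le> \<kappa>"
    and v: "0 < F v"
  shows "EU_b F gC gA k j v < EU_a F gC gA k j v"
proof -
  interpret Fa F v using assms by unfold_locales auto
  have gfin: "finite (set_pmf gA)" using gA_supp finite_subset by blast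
  have g1: "set_pmf gA \<subseteq> {1..}" using gA_supp by auto
  let ?h = "be F v"
  let ?Phi = "Phi gA ?h"
  have beP_Phi: "beP F v (Pnk gA n j) = ?Phi (n - 1) j" for n
    by (simp add: beP_eq[OF finite_Pnk[OF gfin] be01] exp_Pnk)
  have hs: "\<And>a b. 1 \<le> a \<Longrightarrow> a < b \<Longrightarrow> ?h a < ?h b" using be_strict by blast
  have Phi_le: "?Phi m j \<le> ?Phi m' j" if "m \<le> m'" for m m'
  proof (cases "m = m'")
    case False
    then show ?thesis using Phi_mono_m[where h="be F v", OF gfin g1 hs j(1), where m=m and m'=m'] that by simp
  qed simp
  have Phi_ge: "0 \<le> ?Phi m c" for m c
    using exp_le[where f="\<lambda>_. 0" and g="\<lambda>s. ?h (c + s)", OF finite_sum_iid[OF gfin, of m]] be_nonneg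
    by (simp add: Phi_def)
  have Phi_le_v: "?Phi m c \<le> v" for m c
    using exp_le[where g="\<lambda>_. v" and f="\<lambda>s. ?h (c + s)", OF finite_sum_iid[OF gfin, of m]] be_le
    by (simp add: Phi_def)
  have Fv1: "F v \<le> 1" using F_le1[OF F_mono F_lim] .
  have wp_pos: "0 < win_prob F gA n k j v" for n
    unfolding win_prob_def
    using exp_less[where f="\<lambda>_. 0" and g="\<lambda>t. F v ^ t", OF finite_Pnk[OF gfin]] v by simp
  have wp_le: "win_prob F gA n k j v \<le> 1" for n
    unfolding win_prob_def
    using exp_le[where g="\<lambda>_. 1" and f="\<lambda>t. F v ^ t", OF finite_Pnk[OF gfin]] v Fv1
    by (simp add: power_le_one)
  define A where "A n = win_prob F gA n k j v * (v - beP F v (Pnk gA n j))" for n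
  define B where "B n = win_prob F gA n k j v * (v - beP F v (Pnk gA (n + k - 1) j))" for n
  have bnd: "norm (win_prob F gA n k j v * (v - ?Phi m c)) \<le> v" for n m c
  proof -
    have "0 \<le> v - ?Phi m c" "v - ?Phi m c \<le> v" using Phi_ge[of m c] Phi_le_v[of m c] by auto
    moreover have "0 \<le> win_prob F gA n k j v" using wp_pos[of n] by simp
    ultimately have "norm (win_prob F gA n k j v * (v - ?Phi m c)) = win_prob F gA n k j v * (v - ?Phi m c)"
      by simp
    also have "\<dots> \<le> 1 * (v - ?Phi m c)"
      by (rule mult_right_mono[OF wp_le]) (use \<open>0 \<le> v - ?Phi m c\<close> in simp)
    also have "\<dots> \<le> v" using \<open>v - ?Phi m c \<le> v\<close> by simp
    finally show ?thesis .
  qed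
  have iA: "integrable gC A"
  proof (rule measure_pmf.integrable_const_bound[where B=v])
    show "AE x in gC. norm (A x) \<le> v" unfolding AE_measure_pmf_iff A_def beP_Phi using bnd by blast
    show "A \<in> borel_measurable gC" by simp
  qed
  have iB: "integrable gC B"
  proof (rule measure_pmf.integrable_const_bound[where B=v])
    show "AE x in gC. norm (B x) \<le> v" unfolding AE_measure_pmf_iff B_def beP_Phi using bnd by blast
    show "B \<in> borel_measurable gC" by simp
  qed
  define D where "D n = A n - B n" for n
  have D_eq: "D n = win_prob F gA n k j v * (?Phi (n + k - 1 - 1) j - ?Phi (n - 1) j)" for n
    by (simp add: D_def A_def B_def beP_Phi algebra_simps)
  have D_nn: "0 \<le> D n" for n
  proof -
    have "n - 1 \<le> n + k - 1 - 1" using k by simp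
    then have "0 \<le> ?Phi (n + k - 1 - 1) j - ?Phi (n - 1) j" using Phi_le by simp
    then show ?thesis unfolding D_eq using wp_pos[of n] by simp
  qed
  have iD: "integrable gC D" unfolding D_def using iA iB by simp
  obtain n where n: "n \<in> set_pmf gC" using set_pmf_not_empty by fast
  have "n \<noteq> 0" by (rule notI) (use n gC0 in \<open>simp add: set_pmf_eq\<close>)
  moreover have "n \<noteq> 1" by (rule notI) (use n gC1 in \<open>simp add: set_pmf_eq\<close>)
  ultimately have "n - 1 < n + k - 1 - 1" using k by simp
  then have "D n > 0"
    unfolding D_eq using wp_pos[of n] Phi_mono_m[where h="be F v", OF gfin g1 hs j(1)] by simp
  have "measure_pmf.expectation gC D \<noteq> 0"
    using integral_nonneg_eq_0_iff_AE[OF iD] D_nn n \<open>D n > 0\<close>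
    by (auto simp: AE_measure_pmf_iff)
  moreover have "measure_pmf.expectation gC D \<ge> 0" using D_nn by (simp add: integral_nonneg)
  ultimately have "measure_pmf.expectation gC D > 0" by linarith
  moreover have "measure_pmf.expectation gC D = EU_a F gC gA k j v - EU_b F gC gA k j v"
  proof -
    have "measure_pmf.expectation gC D = measure_pmf.expectation gC A - measure_pmf.expectation gC B"
      unfolding D_def by (rule Bochner_Integration.integral_diff[OF iA iB])
    moreover have "EU_a F gC gA k j v = measure_pmf.expectation gC A"
      unfolding EU_a_def A_def[abs_def] ..
    moreover have "EU_b F gC gA k j v = measure_pmf.expectation gC B"
      unfolding EU_b_def B_def[abs_def] ..
    ultimately show ?thesis by simp
  qed
  ultimately show ?thesis by linarith
qed

end
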